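(* Let $\mathcal{A}$ be a u-MPS core tensor and $R$ a (possibly ambiguous) regex such that the generalized right transfer operator $\mathcal{E}^r_R$ converges. Let $Q_\ell,Q_r\in\mathbb{R}^{D\times D}$ be positive semidefinite with $\mathcal{Z}_R(Q_\ell,Q_r)>0$ (and assume all normalization constants encountered by the algorithm are positive). Then the random string output by $\mathrm{SAMPLE}(R,Q_\ell,Q_r)$ has distribution $$P_R(s,Q_\ell,Q_r)=|s|_R\,\frac{\tilde P(s,Q_\ell,Q_r)}{\mathcal{Z}_R(Q_\ell,Q_r)},\qquad s\in\Sigma^*,$$ where $\tilde P(s,Q_\ell,Q_r)=\mathrm{Tr}(Q_\ell\,\mathcal{E}^r_s(Q_r))=\mathrm{Tr}(Q_\ell\mathcal{A}(s)Q_r\mathcal{A}(s)^T)$ and $\mathcal{Z}_R(Q_\ell,Q_r)=\mathrm{Tr}(Q_\ell\,\mathcal{E}^r_R(Q_r))$.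
   Context: A u-MPS core tensor $\mathcal{A}$ of shape $(D,d,D)$ over a finite alphabet $\Sigma$ of size $d$ assigns to each $c\in\Sigma$ a matrix $\mathcal{A}(c)\in\mathbb{R}^{D\times D}$; for $s=s_1\cdots s_n$, $\mathcal{A}(s)=\mathcal{A}(s_1)\cdots\mathcal{A}(s_n)$, $\mathcal{A}(\varepsilon)=I$. Regex are syntax trees built from characters $c\in\Sigma$, concatenations $R_1R_2$, unions $R_1|R_2$, Kleene closures $S^*$. Match counts: $|s|_c=1$ if $s=c$, else $0$; $|s|_{R_1R_2}=\sum_{s_1s_2=s}|s_1|_{R_1}|s_2|_{R_2}$; $|s|_{R_1|R_2}=|s|_{R_1}+|s|_{R_2}$; $|s|_{S^*}=\sum_{n\ge0}\sum_{s_1\cdots s_n=s}\prod_i|s_i|_S$ (the $n=0$ term being $1$ iff $s=\varepsilon$). Generalized transfer operators: $\mathcal{E}^r_c(Q)=\mathcal{A}(c)Q\mathcal{A}(c)^T$, $\mathcal{E}^\ell_c(Q)=\mathcal{A}(c)^TQ\mathcal{A}(c)$; $\mathcal{E}^r_{R_1R_2}=\mathcal{E}^r_{R_1}\circ\mathcal{E}^r_{R_2}$, $\mathcal{E}^\ell_{R_1R_2}=\mathcal{E}^\ell_{R_2}\circ\mathcal{E}^\ell_{R_1}$; unions give sums; $\mathcal{E}^r_{S^*}=\sum_{n\ge0}(\mathcal{E}^r_S)^{\circ n}$, $\mathcal{E}^\ell_{S^*}=\sum_{n\ge0}(\mathcal{E}^\ell_S)^{\circ n}$. A literal string $s$ is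 treated as the concatenation of its characters, so $\mathcal{E}^r_s(Q)=\mathcal{A}(s)Q\mathcal{A}(s)^T$, $\mathcal{E}^\ell_s(Q)=\mathcal{A}(s)^TQ\mathcal{A}(s)$. $\mathcal{E}^r_R$ converges if all Kleene-closure series in its recursive definition converge. Define $\mathcal{Z}_R(Q_\ell,Q_r)=\mathrm{Tr}(Q_\ell\mathcal{E}^r_R(Q_r))$. The randomized procedure $\mathrm{SAMPLE}(R,Q_\ell,Q_r)$ is defined recursively: (i) if $R=c$, return $c$; (ii) if $R=R_1R_2$, let $s_1=\mathrm{SAMPLE}(R_1,Q_\ell,\mathcal{E}^r_{R_2}(Q_r))$, then $s_2=\mathrm{SAMPLE}(R_2,\mathcal{E}^\ell_{s_1}(Q_\ell),Q_r)$, and return $s_1s_2$; (iii) if $R=R_1|R_2$, choose $i\in\{1,2\}$ with probability $\mathcal{Z}_{R_i}(Q_\ell,Q_r)/\mathcal{Z}_{R_1|R_2}(Q_\ell,Q_r)$ and return $\mathrm{SAMPLE}(R_i,Q_\ell,Q_r)$; (iv) if $R=S^*$, with probability $p_{\mathrm{HALT}}=\mathrm{Tr}(Q_\ell Q_r)/\mathcal{Z}_{S^*}(Q_\ell,Q_r)$ return the empty string $\varepsilon$, and otherwise (probability $1-p_{\mathrm{HALT}}$) return $\mathrm{SAMPLE}(SS^*,Q_\ell,Q_r)$, where $SS^*$ is the concatenation of $S$ with $S^*$. All random choices are independent. *)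

theory Defs
  imports "HOL-Analysis.Analysis" "HOL-Probability.Probability"
begin

datatype 'c regex = Chr 'c | Cat "'c regex" "'c regex" | Alt "'c regex" "'c regex" | Star "'c regex"

(* Match count |s|_R, valued in [0,\<infinity>] (Kleene-star counts are infinite sums) *)
primrec cnt :: "'c regex \<Rightarrow> 'c list \<Rightarrow> ennreal" where
  "cnt (Chr c) s = (if s = [c] then 1 else 0)"
| "cnt (Cat R1 R2) s = (\<Sum>i\<in>{0..length s}. cnt R1 (take i s) * cnt R2 (drop i s))"
| "cnt (Alt R1 R2) s = cnt R1 s + cnt R2 s"
| "cnt (Star S) s =
     (\<Sum>n. \<Sum>ss\<in>{ss. length ss = n \<and> concat ss = s}. prod_list (map (cnt S) ss))"

definition Astr :: "('c \<Rightarrow> real^'n^'n) \<Rightarrow> 'c list \<Rightarrow> real^'n^'n" where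
  "Astr A s = foldr (\<lambda>c M. A c ** M) s (mat 1)"

primrec Er :: "('c \<Rightarrow> real^'n^'n) \<Rightarrow> 'c regex \<Rightarrow> real^'n^'n \<Rightarrow> real^'n^'n" where
  "Er A (Chr c) Q = A c ** Q ** transpose (A c)"
| "Er A (Cat R1 R2) Q = Er A R1 (Er A R2 Q)"
| "Er A (Alt R1 R2) Q = Er A R1 Q + Er A R2 Q"
| "Er A (Star S) Q = (\<Sum>n. (Er A S ^^ n) Q)"

primrec Er_converges :: "('c \<Rightarrow> real^'n^'n) \<Rightarrow> 'c regex \<Rightarrow> bool" where
  "Er_converges A (Chr c) = True"
| "Er_converges A (Cat R1 R2) = (Er_converges A R1 \<and> Er_converges A R2)"
| "Er_converges A (Alt R1 R2) = (Er_converges A R1 \<and> Er_converges A R2)"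
| "Er_converges A (Star S) = (Er_converges A S \<and> (\<forall>Q. summable (\<lambda>n. (Er A S ^^ n) Q)))"

definition El_str :: "('c \<Rightarrow> real^'n^'n) \<Rightarrow> 'c list \<Rightarrow> real^'n^'n \<Rightarrow> real^'n^'n" where
  "El_str A s Q = transpose (Astr A s) ** Q ** Astr A s"

definition Zf :: "('c \<Rightarrow> real^'n^'n) \<Rightarrow> 'c regex \<Rightarrow> real^'n^'n \<Rightarrow> real^'n^'n \<Rightarrow> real" where
  "Zf A R Ql Qr = trace (Ql ** Er A R Qr)"

definition Ptilde :: "('c \<Rightarrow> real^'n^'n) \<Rightarrow> 'c list \<Rightarrow> real^'n^'n \<Rightarrow> real^'n^'n \<Rightarrow> real" where
  "Ptilde A s Ql Qr = trace (Ql ** (Astr A s ** Qr ** transpose (Astr A s)))"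

definition psd :: "real^'n^'n \<Rightarrow> bool" where
  "psd Q \<longleftrightarrow> transpose Q = Q \<and> (\<forall>x. 0 \<le> x \<bullet> (Q *v x))"

(* The randomized procedure SAMPLE, as a (sub)probability distribution on outputs
   (least fixed point: non-terminating runs lose mass). *)
partial_function (spmf) sample ::
  "('c \<Rightarrow> real^'n^'n) \<Rightarrow> 'c regex \<Rightarrow> real^'n^'n \<Rightarrow> real^'n^'n \<Rightarrow> 'c list spmf" where
  "sample A R Ql Qr = (case R of
     Chr c \<Rightarrow> return_spmf [c]
   | Cat R1 R2 \<Rightarrow>
       bind_spmf (sample A R1 Ql (Er A R2 Qr)) (\<lambda>s1.
       bind_spmf (sample A R2 (El_str A s1 Ql) Qr) (\<lambda>s2.
       return_spmf (s1 @ s2)))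
   | Alt R1 R2 \<Rightarrow>
       bind_spmf (spmf_of_pmf (bernoulli_pmf (Zf A R1 Ql Qr / Zf A (Alt R1 R2) Ql Qr)))
         (\<lambda>b. if b then sample A R1 Ql Qr else sample A R2 Ql Qr)
   | Star S \<Rightarrow>
       bind_spmf (spmf_of_pmf (bernoulli_pmf (trace (Ql ** Qr) / Zf A (Star S) Ql Qr)))
         (\<lambda>halt. if halt then return_spmf [] else sample A (Cat S (Star S)) Ql Qr))"

end

theory Submission
  imports Defs
begin


lemma quad_form: "(x::real^'n) \<bullet> ((P::real^'n^'n) *v x) = (\<Sum>i\<in>UNIV. \<Sum>j\<in>UNIV. x$i * P$i$j * x$j)"
  by (simp add: inner_vec_def matrix_vector_mult_def sum_distrib_left mult.assoc)

lemma trace_mult_sum: "trace ((P::real^'n^'n) ** Q) = (\<Sum>i\<in>UNIV. \<Sum>j\<in>UNIV. P$i$j * Q$j$i)"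
  by (simp add: trace_def matrix_matrix_mult_def)

lemma psd_sym: "psd (P::real^'n^'n) \<Longrightarrow> P$i$j = P$j$i"
  unfolding psd_def by (metis (no_types) transpose_def vec_lambda_beta)

lemma psd_quad_nonneg: "psd (P::real^'n^'n) \<Longrightarrow> 0 \<le> (\<Sum>i\<in>UNIV. \<Sum>j\<in>UNIV. (x::real^'n)$i * P$i$j * x$j)"
  unfolding psd_def quad_form[symmetric] by blast

lemma psd_diag: "psd (P::real^'n^'n) \<Longrightarrow> 0 \<le> P$k$k"
proof -
  assume "psd P"
  then have "0 \<le> axis k 1 \<bullet> (P *v axis k 1)" unfolding psd_def by blast
  then show ?thesis by (simp add: inner_axis' matrix_vector_mult_basis column_def)
qed

lemma psd_zero_diag:
  fixes P :: "real^'n^'n"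
  assumes "psd P" "P$k$k = 0"
  shows "P$k$j = 0"
proof (rule ccontr)
  assume ne: "P$k$j \<noteq> 0"
  then have jk: "j \<noteq> k" using assms by auto
  define t where "t = - (P$j$j + 1) / (2 * P$k$j)"
  define x where "x = (\<chi> i. if i = k then t else if i = j then 1 else (0::real))"
  have "0 \<le> (\<Sum>i\<in>UNIV. \<Sum>j\<in>UNIV. x$i * P$i$j * x$j)" by (rule psd_quad_nonneg[OF assms(1)])
  also have "(\<Sum>i\<in>UNIV. \<Sum>j\<in>UNIV. x$i * P$i$j * x$j) = t*t*P$k$k + t*P$k$j + P$j$k*t + P$j$j"
  proof -
    have inner: "(\<Sum>l\<in>UNIV. x$i * P$i$l * x$l) = (\<Sum>l\<in>{k,j}. x$i * P$i$l * x$l)" for i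
      by (rule sum.mono_neutral_right) (auto simp: x_def)
    have "(\<Sum>i\<in>UNIV. \<Sum>l\<in>UNIV. x$i * P$i$l * x$l) = (\<Sum>i\<in>UNIV. \<Sum>l\<in>{k,j}. x$i * P$i$l * x$l)"
      by (simp add: inner)
    also have "\<dots> = (\<Sum>i\<in>{k,j}. \<Sum>l\<in>{k,j}. x$i * P$i$l * x$l)"
      by (rule sum.mono_neutral_right) (auto simp: x_def)
    also have "\<dots> = t*t*P$k$k + t*P$k$j + P$j$k*t + P$j$j"
      using jk by (simp add: x_def)
    finally show ?thesis .
  qed
  also have "\<dots> = 2 * t * P$k$j + P$j$j" using assms psd_sym[OF assms(1), of j k] by simp
  also have "\<dots> = -1" using ne by (simp add: t_def field_simps)
  finally show False by simp
qed



lemma trace_psd_aux: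
  fixes Q :: "real^'n^'n"
  assumes Q: "psd Q"
  shows "finite I \<Longrightarrow> psd P \<Longrightarrow> (\<forall>i j. i \<notin> I \<or> j \<notin> I \<longrightarrow> P$i$j = 0) \<Longrightarrow> 0 \<le> trace (P ** Q)"
proof (induction I arbitrary: P rule: finite_induct)
  case empty
  then have "P = 0" by (simp add: vec_eq_iff)
  then show ?case by (simp add: trace_def)
next
  case (insert k I)
  show ?case
  proof (cases "P$k$k = 0")
    case True
    have "P$i$j = 0" if "i \<notin> I \<or> j \<notin> I" for i j
    proof (cases "i = k \<or> j = k")
      case True
      then show ?thesis using psd_zero_diag[OF insert.prems(1) \<open>P$k$k = 0\<close>]
        psd_sym[OF insert.prems(1)] by metis
    next
      case False
      then show ?thesis using that insert.prems(2) by auto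
    qed
    then show ?thesis using insert by blast
  next
    case False
    define c where "c = P$k$k"
    have cpos: "c > 0" using psd_diag[OF insert.prems(1), of k] False c_def by simp
    define p where "p = (\<chi> i. P$i$k)"
    define R where "R = (\<chi> i j. p$i * p$j)"
    define P' where "P' = P - (1/c) *\<^sub>R R"
    have symP: "P$i$j = P$j$i" for i j using psd_sym[OF insert.prems(1)] .
    have P'ij: "P'$i$j = P$i$j - P$i$k * P$k$j / c" for i j
      by (simp add: P'_def R_def p_def symP[of k j])
    have "psd P'"
      unfolding psd_def
    proof (intro conjI allI)
      show "transpose P' = P'"
        by (simp add: vec_eq_iff transpose_def P'ij symP mult.commute)
    next
      fix x :: "real^'n"
      define a where "a = (\<Sum>j\<in>UNIV. P$k$j * x$j) / c"
      define y where "y = x - a *\<^sub>R axis k 1"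
      have "0 \<le> y \<bullet> (P *v y)" using insert.prems(1) unfolding psd_def by blast
      also have "y \<bullet> (P *v y) = x \<bullet> (P *v x) - a * (axis k 1 \<bullet> (P *v x)) - a * (x \<bullet> (P *v axis k 1)) + a * a * (axis k 1 \<bullet> (P *v axis k 1))"
        by (simp add: y_def matrix_vector_right_distrib matrix_vector_mult_diff_distrib
            inner_diff_left inner_diff_right algebra_simps matrix_vector_mult_scaleR)
      also have "axis k 1 \<bullet> (P *v x) = c * a"
        using cpos by (simp add: inner_axis' a_def matrix_vector_mult_def)
      also have "x \<bullet> (P *v axis k 1) = c * a"
        using cpos by (simp add: inner_vec_def a_def matrix_vector_mult_basis column_def symP[of _ k] mult.commute)
      also have "axis k 1 \<bullet> (P *v axis k 1) = c"
        by (simp add: inner_axis' matrix_vector_mult_basis column_def c_def)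
      also have "x \<bullet> (P *v x) - a * (c * a) - a * (c * a) + a * a * c = x \<bullet> (P *v x) - c * a * a"
        by (simp add: algebra_simps)
      also have "\<dots> = x \<bullet> (P' *v x)"
      proof -
        have "x \<bullet> (P' *v x) = (\<Sum>i\<in>UNIV. \<Sum>j\<in>UNIV. x$i * P$i$j * x$j) - (\<Sum>i\<in>UNIV. \<Sum>j\<in>UNIV. x$i * (P$i$k * P$k$j / c) * x$j)"
          by (simp add: quad_form P'ij algebra_simps sum_subtractf)
        also have "(\<Sum>i\<in>UNIV. \<Sum>j\<in>UNIV. x$i * (P$i$k * P$k$j / c) * x$j) = c * a * a"
        proof -
          have "(\<Sum>i\<in>UNIV. \<Sum>j\<in>UNIV. x$i * (P$i$k * P$k$j / c) * x$j)
              = (\<Sum>i\<in>UNIV. x$i * P$k$i) * (\<Sum>j\<in>UNIV. P$k$j * x$j) / c"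
            by (simp add: sum_distrib_left sum_distrib_right sum_divide_distrib symP[of _ k] algebra_simps)
          also have "\<dots> = c * a * a" using cpos by (simp add: a_def mult.commute field_simps)
          finally show ?thesis .
        qed
        finally show ?thesis by (simp add: quad_form)
      qed
      finally show "0 \<le> x \<bullet> (P' *v x)" .
    qed
    moreover have "\<forall>i j. i \<notin> I \<or> j \<notin> I \<longrightarrow> P'$i$j = 0"
    proof (intro allI impI)
      fix i j assume "i \<notin> I \<or> j \<notin> I"
      then consider "i = k" | "j = k" | "i \<notin> insert k I" | "j \<notin> insert k I" by blast
      then show "P'$i$j = 0"
      proof cases
        case 1 then show ?thesis using cpos by (simp add: P'ij c_def)
      next
        case 2 then show ?thesis using cpos by (simp add: P'ij c_def symP[of i k])
      next
        case 3 then show ?thesis using insert.prems(2) by (simp add: P'ij)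
      next
        case 4 then show ?thesis using insert.prems(2) by (simp add: P'ij)
      qed
    qed
    ultimately have ih: "0 \<le> trace (P' ** Q)" using insert.IH by blast
    have Rn: "0 \<le> trace (R ** Q)"
    proof -
      have "trace (R ** Q) = p \<bullet> (Q *v p)"
        by (simp add: trace_mult_sum quad_form R_def psd_sym[OF Q] algebra_simps)
      then show ?thesis using Q unfolding psd_def by simp
    qed
    have "trace (P ** Q) = trace (P' ** Q) + (1/c) * trace (R ** Q)"
      by (simp add: trace_mult_sum P'_def sum_distrib_left algebra_simps sum.distrib[symmetric] sum_subtractf[symmetric])
    then show ?thesis using ih Rn cpos by simp
  qed
qed

lemma trace_psd_nonneg:
  fixes P Q :: "real^'n^'n"
  assumes "psd P" "psd Q" shows "0 \<le> trace (P ** Q)"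
  using trace_psd_aux[OF assms(2) _ assms(1), of UNIV] by simp



lemma matrix_add_rdistrib': "((A::real^'n^'m) + B) ** (C::real^'p^'n) = A ** C + B ** C"
  by (vector matrix_matrix_mult_def sum.distrib[symmetric] field_simps)

lemma transpose_add': "transpose ((A::real^'n^'m) + B) = transpose A + transpose B"
  by (simp add: vec_eq_iff transpose_def)

lemma psd_zero: "psd (0::real^'n^'n)"
  by (simp add: psd_def vec_eq_iff transpose_def)

lemma psd_add: "psd (P::real^'n^'n) \<Longrightarrow> psd Q \<Longrightarrow> psd (P + Q)"
  unfolding psd_def by (simp add: transpose_add' matrix_vector_mult_add_rdistrib inner_add_right add_nonneg_nonneg)

lemma psd_scale: "psd (P::real^'n^'n) \<Longrightarrow> 0 \<le> c \<Longrightarrow> psd (c *\<^sub>R P)"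
  unfolding psd_def by (simp add: transpose_scalar scaleR_matrix_vector_assoc[symmetric])

lemma psd_congr: "psd (Q::real^'n^'n) \<Longrightarrow> psd ((M::real^'n^'m) ** Q ** transpose M)"
  unfolding psd_def
proof (intro conjI allI; elim conjE)
  assume t: "transpose Q = Q" and p: "\<forall>x. 0 \<le> x \<bullet> (Q *v x)"
  show "transpose (M ** Q ** transpose M) = M ** Q ** transpose M"
    by (simp add: matrix_transpose_mul t matrix_mul_assoc)
  fix x :: "real^'m"
  have "x \<bullet> ((M ** Q ** transpose M) *v x) = (transpose M *v x) \<bullet> (Q *v (transpose M *v x))"
    by (simp add: matrix_vector_mul_assoc[symmetric] dot_lmul_matrix[symmetric])
  then show "0 \<le> x \<bullet> ((M ** Q ** transpose M) *v x)" using p by simp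
qed

lemma linear_entry: "linear (\<lambda>Q::real^'n^'n. Q$i$j)"
  by (rule linearI) auto

lemma linear_quad: "linear (\<lambda>Q::real^'n^'n. x \<bullet> (Q *v x))"
  by (rule linearI) (auto simp: matrix_vector_mult_add_rdistrib inner_add_right scaleR_matrix_vector_assoc[symmetric])

lemma closed_psd: "closed {Q::real^'n^'n. psd Q}"
proof -
  have "{Q::real^'n^'n. psd Q} = {Q. \<forall>i. \<forall>j. Q$i$j = Q$j$i} \<inter> {Q. \<forall>x. 0 \<le> x \<bullet> (Q *v x)}"
    unfolding psd_def by (auto simp: vec_eq_iff transpose_def)
  also have "closed \<dots>"
    by (intro closed_Int closed_Collect_all closed_Collect_eq closed_Collect_le
        linear_continuous_on continuous_on_const
        linear_entry[THEN linear_conv_bounded_linear[THEN iffD1]]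
        linear_quad[THEN linear_conv_bounded_linear[THEN iffD1]])
  finally show ?thesis .
qed

lemma psd_limit: "(X \<longlongrightarrow> L) sequentially \<Longrightarrow> (\<And>n. psd (X n)) \<Longrightarrow> psd (L::real^'n^'n)"
  using closed_psd Lim_in_closed_set[of "{Q. psd Q}" X sequentially L] by auto

lemma psd_sum: "(\<And>i. i \<in> I \<Longrightarrow> psd (f i)) \<Longrightarrow> psd (sum f I :: real^'n^'n)"
  by (induction I rule: infinite_finite_induct) (auto intro: psd_add psd_zero)

lemma psd_suminf: "summable f \<Longrightarrow> (\<And>n. psd (f n)) \<Longrightarrow> psd (suminf f :: real^'n^'n)"
  by (rule psd_limit[OF summable_LIMSEQ]) (auto intro: psd_sum)

lemma Er_Chr_linear: "linear (\<lambda>Q. (M::real^'n^'n) ** Q ** transpose M)"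
  by (rule linearI) (simp_all add: matrix_add_ldistrib matrix_add_rdistrib' matrix_scalar_ac scalar_matrix_assoc)

lemma linear_funpow: "linear (f::real^'n^'n \<Rightarrow> real^'n^'n) \<Longrightarrow> linear (f ^^ n)"
proof (induction n)
  case 0 show ?case by (simp, rule linearI, auto)
next
  case (Suc n)
  then have "linear (f ^^ n)" by simp
  from linear_compose[OF this Suc.prems] show ?case by (simp add: o_def)
qed

lemma Er_linear: "Er_converges A R \<Longrightarrow> linear (Er A R)"
proof (induction R)
  case (Chr c) then show ?case using Er_Chr_linear[of "A c"] by simp
next
  case (Cat R1 R2) then show ?case using linear_compose[of "Er A R2" "Er A R1"] by (simp add: o_def)
next
  case (Alt R1 R2)
  then have l1: "linear (Er A R1)" and l2: "linear (Er A R2)" by auto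
  show ?case
    by (rule linearI) (simp_all add: linear_add[OF l1] linear_add[OF l2] linear_scale[OF l1] linear_scale[OF l2] scaleR_add_right)
next
  case (Star S)
  then have lin: "linear (Er A S ^^ n)" for n by (simp add: linear_funpow)
  have sm: "summable (\<lambda>n. (Er A S ^^ n) Q)" for Q using Star.prems by simp
  show ?case
  proof (rule linearI)
    fix x y
    show "Er A (Star S) (x + y) = Er A (Star S) x + Er A (Star S) y"
      using suminf_add[OF sm[of x] sm[of y]] by (simp add: linear_add[OF lin])
  next
    fix c :: real and x
    show "Er A (Star S) (c *\<^sub>R x) = c *\<^sub>R Er A (Star S) x"
      using suminf_scaleR_right[OF sm[of x], of c] by (simp add: linear_scale[OF lin])
  qed
qed

lemma funpow_psd: "(\<And>Q. psd Q \<Longrightarrow> psd (f Q)) \<Longrightarrow> psd (Q::real^'n^'n) \<Longrightarrow> psd (((f::real^'n^'n \<Rightarrow> real^'n^'n) ^^ n) Q)"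
proof (induction n)
  case 0 then show ?case by (simp only: funpow_0)
next
  case (Suc n) then show ?case by simp
qed

lemma Er_psd: "Er_converges A R \<Longrightarrow> psd Q \<Longrightarrow> psd (Er A R Q)"
proof (induction R arbitrary: Q)
  case (Chr c) then show ?case by (simp add: psd_congr)
next
  case (Cat R1 R2) then show ?case by simp
next
  case (Alt R1 R2) then show ?case by (simp add: psd_add)
next
  case (Star S)
  then show ?case by (simp add: psd_suminf funpow_psd)
qed

lemma Er_star_unfold:
  assumes "Er_converges A (Star S)"
  shows "Er A (Star S) Q = Q + Er A S (Er A (Star S) Q)"
proof -
  have sm: "summable (\<lambda>n. (Er A S ^^ n) Q)" using assms by simp
  have bl: "bounded_linear (Er A S)" using Er_linear[of A S] assms linear_conv_bounded_linear by auto
  have "Er A (Star S) Q = (\<Sum>n. (Er A S ^^ n) Q)" by simp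
  also have "\<dots> = (\<Sum>n. (Er A S ^^ Suc n) Q) + (Er A S ^^ 0) Q"
    using suminf_split_head[OF sm] by simp
  also have "(\<Sum>n. (Er A S ^^ Suc n) Q) = Er A S (\<Sum>n. (Er A S ^^ n) Q)"
    using bounded_linear.suminf[OF bl sm] by simp
  finally show ?thesis by (simp add: add.commute)
qed



lemma Astr_Nil[simp]: "Astr A [] = mat 1" by (simp add: Astr_def)
lemma Astr_Cons: "Astr A (c # s) = A c ** Astr A s" by (simp add: Astr_def)
lemma Astr_append: "Astr A (s1 @ s2) = Astr A s1 ** Astr A s2"
  by (induction s1) (simp_all add: Astr_Cons matrix_mul_assoc)

lemma trace_congr_swap:
  fixes B Ql M :: "real^'n^'n"
  shows "trace ((transpose B ** Ql ** B) ** M) = trace (Ql ** (B ** M ** transpose B))"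
proof -
  have "trace ((transpose B ** Ql ** B) ** M) = trace (transpose B ** ((Ql ** B) ** M))"
    by (simp add: matrix_mul_assoc)
  also have "\<dots> = trace (((Ql ** B) ** M) ** transpose B)" by (rule trace_mul_sym)
  also have "\<dots> = trace (Ql ** (B ** M ** transpose B))" by (simp add: matrix_mul_assoc)
  finally show ?thesis .
qed

lemma Ptilde_append: "Ptilde A (s1 @ s2) Ql Qr = Ptilde A s2 (El_str A s1 Ql) Qr"
proof -
  have e: "Astr A (s1@s2) ** Qr ** transpose (Astr A (s1@s2)) = Astr A s1 ** (Astr A s2 ** Qr ** transpose (Astr A s2)) ** transpose (Astr A s1)"
    by (simp add: Astr_append matrix_transpose_mul matrix_mul_assoc)
  show ?thesis unfolding Ptilde_def El_str_def e by (rule trace_congr_swap[symmetric])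
qed

lemma Zf_El: "Zf A R (El_str A s1 Ql) Qr = Ptilde A s1 Ql (Er A R Qr)"
  unfolding Ptilde_def El_str_def Zf_def by (simp add: trace_congr_swap)

lemma El_psd: "psd Ql \<Longrightarrow> psd (El_str A s Ql)"
  unfolding El_str_def using psd_congr[of Ql "transpose (Astr A s)"] by simp

lemma Ptilde_nonneg: "psd Ql \<Longrightarrow> psd Qr \<Longrightarrow> 0 \<le> Ptilde A s Ql Qr"
  unfolding Ptilde_def by (intro trace_psd_nonneg psd_congr)

lemma Zf_nonneg: "Er_converges A R \<Longrightarrow> psd Ql \<Longrightarrow> psd Qr \<Longrightarrow> 0 \<le> Zf A R Ql Qr"
  unfolding Zf_def by (intro trace_psd_nonneg Er_psd)

lemma Ptilde_Nil: "Ptilde A [] Ql Qr = trace (Ql ** Qr)"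
  by (simp add: Ptilde_def)

lemma Ptilde_single: "Ptilde A [c] Ql Qr = Zf A (Chr c) Ql Qr"
  by (simp add: Ptilde_def Zf_def Astr_Cons matrix_mul_assoc)

lemma Zf_Cat: "Zf A (Cat R1 R2) Ql Qr = Zf A R1 Ql (Er A R2 Qr)"
  by (simp add: Zf_def)

lemma Zf_Alt: "Zf A (Alt R1 R2) Ql Qr = Zf A R1 Ql Qr + Zf A R2 Ql Qr"
  by (simp add: Zf_def matrix_add_ldistrib trace_add)

lemma Zf_Star: "Er_converges A (Star S) \<Longrightarrow>
    Zf A (Star S) Ql Qr = trace (Ql ** Qr) + Zf A (Cat S (Star S)) Ql Qr"
  unfolding Zf_def
  by (subst Er_star_unfold[of A S Qr], assumption) (simp add: matrix_add_ldistrib trace_add)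

lemma psd_mat1: "psd (mat 1 :: real^'n^'n)"
  unfolding psd_def by (simp add: transpose_mat matrix_vector_mul_lid)

lemma psd_diag': "psd (P::real^'n^'n) \<Longrightarrow> 0 \<le> P$k$k" by (rule psd_diag)

lemma Er_ge_id: "Er_converges A S \<Longrightarrow> cnt S [] \<noteq> 0 \<Longrightarrow> psd Q \<Longrightarrow> psd (Er A S Q - Q)"
proof (induction S arbitrary: Q)
  case (Chr c) then show ?case by simp
next
  case (Cat R1 R2)
  then have c: "cnt R1 [] \<noteq> 0" "cnt R2 [] \<noteq> 0" by auto
  have "Er A (Cat R1 R2) Q - Q = (Er A R1 (Er A R2 Q) - Er A R2 Q) + (Er A R2 Q - Q)" by simp
  moreover have "psd (Er A R1 (Er A R2 Q) - Er A R2 Q)"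
    using Cat.IH(1)[of "Er A R2 Q"] Cat.prems c Er_psd[of A R2 Q] by simp
  moreover have "psd (Er A R2 Q - Q)" using Cat c by auto
  ultimately show ?case by (metis psd_add)
next
  case (Alt R1 R2)
  then consider "cnt R1 [] \<noteq> 0" | "cnt R2 [] \<noteq> 0" by fastforce
  then show ?case
  proof cases
    case 1
    have "Er A (Alt R1 R2) Q - Q = (Er A R1 Q - Q) + Er A R2 Q" by simp
    then show ?thesis using Alt 1 Er_psd by (metis Er_converges.simps(3) psd_add)
  next
    case 2
    have "Er A (Alt R1 R2) Q - Q = (Er A R2 Q - Q) + Er A R1 Q" by simp
    then show ?thesis using Alt 2 Er_psd by (metis Er_converges.simps(3) psd_add)
  qed
next
  case (Star S)
  have "Er A (Star S) Q - Q = Er A S (Er A (Star S) Q)"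
    using Er_star_unfold[OF Star.prems(1)] by (metis add_diff_cancel_left')
  then show ?case using Star.prems Er_psd by (metis Er_converges.simps(4))
qed

lemma cnt_nil_zero:
  fixes A :: "'c \<Rightarrow> real^'n^'n"
  assumes conv: "Er_converges A (Star S)"
  shows "cnt S [] = 0"
proof (rule ccontr)
  assume ne: "cnt S [] \<noteq> 0"
  have cS: "Er_converges A S" using conv by simp
  define f where "f n = (Er A S ^^ n) (mat 1 :: real^'n^'n)" for n
  have fpsd: "psd (f n)" for n
    unfolding f_def by (rule funpow_psd[OF Er_psd[OF cS] psd_mat1])
  have ge: "psd (f n - mat 1)" for n
  proof (induction n)
    case 0 then show ?case by (simp add: f_def psd_zero)
  next
    case (Suc n)
    have "f (Suc n) - mat 1 = (Er A S (f n) - f n) + (f n - mat 1)" by (simp add: f_def)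
    then show ?case using Suc Er_ge_id[OF cS ne fpsd[of n]] by (metis psd_add)
  qed
  obtain i :: 'n where True by blast
  have ge1: "1 \<le> f n $ i $ i" for n
    using psd_diag[OF ge[of n], of i] by (simp add: mat_def)
  have "f = (\<lambda>n. (Er A S ^^ n) (mat 1))" by (simp add: f_def fun_eq_iff)
  then have "summable f" using conv by simp
  then have "f \<longlonglongrightarrow> 0" by (rule summable_LIMSEQ_zero)
  then have "(\<lambda>n. f n $ i $ i) \<longlonglongrightarrow> 0 $ i $ i" by (intro tendsto_vec_nth)
  then have "1 \<le> (0::real^'n^'n) $ i $ i" by (rule LIMSEQ_le_const) (use ge1 in auto)
  then show False by simp
qed



lemma ennreal_suminf_head: "(\<Sum>n. (f::nat \<Rightarrow> ennreal) n) = f 0 + (\<Sum>n. f (Suc n))"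
proof -
  have "f sums ((\<Sum>n. f (Suc n)) + f 0)" by (rule sums_Suc[OF summable_sums[OF summableI]])
  then show ?thesis by (simp add: sums_unique[symmetric] add.commute)
qed

definition Bs :: "nat \<Rightarrow> 'c list \<Rightarrow> 'c list list set" where
  "Bs n t = {ss. length ss = n \<and> concat ss = t}"

lemma finite_Bs: "finite (Bs n t)"
proof -
  let ?X = "{xs. set xs \<subseteq> set t \<and> length xs \<le> length t}"
  have fX: "finite ?X" by (rule finite_lists_length_le) simp
  have "Bs n t \<subseteq> {ss. set ss \<subseteq> ?X \<and> length ss \<le> n}"
  proof
    fix ss assume "ss \<in> Bs n t"
    then have "length ss = n" "concat ss = t" by (auto simp: Bs_def)
    moreover have "x \<in> set ss \<Longrightarrow> set x \<subseteq> set (concat ss) \<and> length x \<le> length (concat ss)" for x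
    proof -
      assume "x \<in> set ss"
      then obtain a b where "ss = a @ x # b" by (meson split_list)
      then show ?thesis by auto
    qed
    ultimately show "ss \<in> {ss. set ss \<subseteq> ?X \<and> length ss \<le> n}" by auto
  qed
  moreover have "finite {ss. set ss \<subseteq> ?X \<and> length ss \<le> n}" by (rule finite_lists_length_le[OF fX])
  ultimately show ?thesis by (rule finite_subset)
qed

lemma Bs_0: "Bs 0 t = (if t = [] then {[]} else {})"
  by (auto simp: Bs_def)

lemma Bs_Suc: "Bs (Suc n) t = (\<lambda>(i,xs). take i t # xs) ` (SIGMA i:{0..length t}. Bs n (drop i t))"
proof (intro set_eqI iffI)
  fix ss assume "ss \<in> Bs (Suc n) t"
  then obtain x xs where ss: "ss = x # xs" "length xs = n" "concat (x # xs) = t"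
    by (cases ss) (auto simp: Bs_def)
  then have "x = take (length x) t" "concat xs = drop (length x) t" "length x \<le> length t" by auto
  then show "ss \<in> (\<lambda>(i,xs). take i t # xs) ` (SIGMA i:{0..length t}. Bs n (drop i t))"
    using ss by (auto simp: Bs_def image_iff intro!: bexI[of _ "(length x, xs)"])
next
  fix ss assume "ss \<in> (\<lambda>(i,xs). take i t # xs) ` (SIGMA i:{0..length t}. Bs n (drop i t))"
  then show "ss \<in> Bs (Suc n) t" by (auto simp: Bs_def)
qed

lemma inj_Bs_Suc: "inj_on (\<lambda>(i,xs). take i t # xs) (SIGMA i:{0..length t}. Bs n (drop i t))"
proof (rule inj_onI, clarsimp)
  fix i j :: nat assume "i \<le> length t" "j \<le> length t" "take i t = take j t"
  then show "i = j" by (metis length_take min.absorb2)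
qed

lemma cnt_Star_Bs: "cnt (Star S) t = (\<Sum>n. \<Sum>ss\<in>Bs n t. prod_list (map (cnt S) ss))"
  by (simp add: Bs_def)

lemma cnt_Star_unfold:
  "cnt (Star S) s = (if s = [] then 1 else 0) + (\<Sum>i\<in>{0..length s}. cnt S (take i s) * cnt (Star S) (drop i s))"
proof -
  define g where "g n t = (\<Sum>ss\<in>Bs n t. prod_list (map (cnt S) ss))" for n t
  have g0: "g 0 t = (if t = [] then 1 else 0)" for t by (simp add: g_def Bs_0)
  have gS: "g (Suc n) t = (\<Sum>i\<in>{0..length t}. cnt S (take i t) * g n (drop i t))" for n t
  proof -
    have "g (Suc n) t = (\<Sum>p\<in>(SIGMA i:{0..length t}. Bs n (drop i t)). prod_list (map (cnt S) (take (fst p) t # snd p)))"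
      unfolding g_def Bs_Suc by (subst sum.reindex[OF inj_Bs_Suc]) (simp add: case_prod_beta)
    also have "\<dots> = (\<Sum>i\<in>{0..length t}. \<Sum>xs\<in>Bs n (drop i t). cnt S (take i t) * prod_list (map (cnt S) xs))"
      by (subst sum.Sigma) (auto simp: finite_Bs split_beta)
    also have "\<dots> = (\<Sum>i\<in>{0..length t}. cnt S (take i t) * g n (drop i t))"
      by (simp add: g_def sum_distrib_left)
    finally show ?thesis .
  qed
  have "cnt (Star S) s = (\<Sum>n. g n s)" unfolding cnt_Star_Bs g_def ..
  also have "\<dots> = g 0 s + (\<Sum>n. g (Suc n) s)" by (rule ennreal_suminf_head)
  also have "(\<Sum>n. g (Suc n) s) = (\<Sum>i\<in>{0..length s}. \<Sum>n. cnt S (take i s) * g n (drop i s))"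
    unfolding gS by (rule suminf_sum) (rule summableI)
  also have "\<dots> = (\<Sum>i\<in>{0..length s}. cnt S (take i s) * cnt (Star S) (drop i s))"
    by (simp add: ennreal_suminf_cmult g_def Bs_def)
  finally show ?thesis by (simp add: g0)
qed

lemma spmf_bernoulli_bind:
  assumes "0 \<le> p" "p \<le> 1"
  shows "ennreal (spmf (bind_spmf (spmf_of_pmf (bernoulli_pmf p)) f) x)
       = ennreal (spmf (f True) x) * ennreal p + ennreal (spmf (f False) x) * ennreal (1 - p)"
  unfolding ennreal_spmf_bind measure_spmf_spmf_of_pmf
  by (simp add: nn_integral_bernoulli_pmf assms)



lemma spmf_map_append:
  "spmf (map_spmf ((@) s1) q) s = (if take (length s1) s = s1 then spmf q (drop (length s1) s) else 0)"
proof (cases "take (length s1) s = s1")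
  case True
  then have "s = s1 @ drop (length s1) s" by (metis append_take_drop_id)
  then have "spmf (map_spmf ((@) s1) q) s = spmf (map_spmf ((@) s1) q) (s1 @ drop (length s1) s)" by simp
  also have "\<dots> = spmf q (drop (length s1) s)" by (rule spmf_map_inj') (simp add: inj_def)
  finally show ?thesis using True by simp
next
  case False
  then have "s \<notin> (@) s1 ` set_spmf q" by auto
  then show ?thesis using False by (simp add: spmf_map_outside)
qed

lemma nn_integral_count_space_supp:
  assumes "finite F" "\<And>x. x \<notin> F \<Longrightarrow> g x = 0"
  shows "(\<integral>\<^sup>+ x. g x \<partial>count_space UNIV) = (\<Sum>x\<in>F. g x)"
proof -
  have "(\<integral>\<^sup>+ x. g x \<partial>count_space UNIV) = (\<integral>\<^sup>+ x. g x * indicator F x \<partial>count_space UNIV)"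
    by (rule nn_integral_cong) (auto simp: assms(2) split: split_indicator)
  also have "\<dots> = (\<integral>\<^sup>+ x. g x \<partial>count_space F)"
    by (simp add: nn_integral_count_space_indicator)
  also have "\<dots> = (\<Sum>x\<in>F. g x)" by (rule nn_integral_count_space_finite[OF assms(1)])
  finally show ?thesis .
qed

lemma spmf_cat:
  "ennreal (spmf (sample A (Cat R1 R2) Ql Qr) s) =
   (\<Sum>i\<in>{0..length s}. ennreal (spmf (sample A R1 Ql (Er A R2 Qr)) (take i s)) *
                        ennreal (spmf (sample A R2 (El_str A (take i s) Ql) Qr) (drop i s)))"
proof -
  define p1 where "p1 = sample A R1 Ql (Er A R2 Qr)"
  define p2 where "p2 s1 = sample A R2 (El_str A s1 Ql) Qr" for s1
  have "sample A (Cat R1 R2) Ql Qr = bind_spmf p1 (\<lambda>s1. map_spmf ((@) s1) (p2 s1))"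
    by (subst sample.simps) (simp add: p1_def p2_def map_spmf_conv_bind_spmf)
  then have "ennreal (spmf (sample A (Cat R1 R2) Ql Qr) s) =
     (\<integral>\<^sup>+ s1. ennreal (spmf p1 s1) * ennreal (spmf (map_spmf ((@) s1) (p2 s1)) s) \<partial>count_space UNIV)"
    by (simp only: ennreal_spmf_bind nn_integral_measure_spmf)
  also have "\<dots> = (\<Sum>s1\<in>(\<lambda>i. take i s) ` {0..length s}. ennreal (spmf p1 s1) * ennreal (spmf (map_spmf ((@) s1) (p2 s1)) s))"
  proof (rule nn_integral_count_space_supp)
    fix s1 assume "s1 \<notin> (\<lambda>i. take i s) ` {0..length s}"
    have "take (length s1) s \<noteq> s1"
    proof
      assume h: "take (length s1) s = s1"
      then have "length (take (length s1) s) = length s1" by simp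
      then have "length s1 \<le> length s" by simp
      then have "s1 \<in> (\<lambda>i. take i s) ` {0..length s}" using h by (intro image_eqI[of _ _ "length s1"]) auto
      then show False using \<open>s1 \<notin> _\<close> by blast
    qed
    then show "ennreal (spmf p1 s1) * ennreal (spmf (map_spmf ((@) s1) (p2 s1)) s) = 0"
      by (simp add: spmf_map_append)
  qed simp
  also have "\<dots> = (\<Sum>i\<in>{0..length s}. ennreal (spmf p1 (take i s)) * ennreal (spmf (map_spmf ((@) (take i s)) (p2 (take i s))) s))"
  proof (rule sum.reindex[unfolded o_def])
    show "inj_on (\<lambda>i. take i s) {0..length s}"
    proof (rule inj_onI)
      fix i j assume "i \<in> {0..length s}" "j \<in> {0..length s}" "take i s = take j s"
      then have "length (take i s) = length (take j s)" "i \<le> length s" "j \<le> length s" by auto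
      then show "i = j" by simp
    qed
  qed
  also have "\<dots> = (\<Sum>i\<in>{0..length s}. ennreal (spmf p1 (take i s)) * ennreal (spmf (p2 (take i s)) (drop i s)))"
    by (rule sum.cong) (auto simp: spmf_map_append min_def)
  finally show ?thesis by (simp add: p1_def p2_def)
qed



definition Mp :: "('c \<Rightarrow> real^'n^'n) \<Rightarrow> 'c regex \<Rightarrow> 'c list \<Rightarrow> bool" where
  "Mp A R s \<longleftrightarrow> (\<forall>Ql Qr. psd Ql \<longrightarrow> psd Qr \<longrightarrow> Zf A R Ql Qr > 0 \<longrightarrow>
     ennreal (spmf (sample A R Ql Qr) s) = cnt R s * ennreal (Ptilde A s Ql Qr / Zf A R Ql Qr))"

definition Zp :: "('c \<Rightarrow> real^'n^'n) \<Rightarrow> 'c regex \<Rightarrow> 'c list \<Rightarrow> bool" where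
  "Zp A R s \<longleftrightarrow> (\<forall>Ql Qr. psd Ql \<longrightarrow> psd Qr \<longrightarrow> Zf A R Ql Qr = 0 \<longrightarrow>
     cnt R s * ennreal (Ptilde A s Ql Qr) = 0)"

lemma ennreal_div_split: "0 \<le> P \<Longrightarrow> 0 < Z \<Longrightarrow> ennreal (P / Z) = ennreal P * ennreal (1 / Z)"
  by (subst ennreal_mult[symmetric]) auto

lemma ennreal_div_chain: "0 \<le> P \<Longrightarrow> 0 < Z1 \<Longrightarrow> 0 < Z \<Longrightarrow>
   ennreal (Z1 / Z) * ennreal (P / Z1) = ennreal (P / Z)"
  by (subst ennreal_mult[symmetric]) auto

lemma cat_main:
  fixes A :: "'c \<Rightarrow> real^'n^'n"
  assumes c1: "Er_converges A R1" and c2: "Er_converges A R2"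
    and h1: "\<And>t. Mp A R1 t \<and> Zp A R1 t"
    and h2: "\<And>i. i \<in> {0..length s} \<Longrightarrow> cnt R1 (take i s) \<noteq> 0 \<Longrightarrow> Mp A R2 (drop i s) \<and> Zp A R2 (drop i s)"
  shows "Mp A (Cat R1 R2) s \<and> Zp A (Cat R1 R2) s"
proof
  show "Mp A (Cat R1 R2) s"
    unfolding Mp_def
  proof (intro allI impI)
    fix Ql Qr :: "real^'n^'n"
    assume Ql: "psd Ql" and Qr: "psd Qr" and Zpos: "Zf A (Cat R1 R2) Ql Qr > 0"
    define Z where "Z = Zf A (Cat R1 R2) Ql Qr"
    define P where "P = Ptilde A s Ql Qr"
    have P0: "0 \<le> P" unfolding P_def by (rule Ptilde_nonneg[OF Ql Qr])
    have Zp': "0 < Z" using Zpos Z_def by simp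
    have Qr2: "psd (Er A R2 Qr)" by (rule Er_psd[OF c2 Qr])
    have Z1: "Zf A R1 Ql (Er A R2 Qr) = Z" by (simp add: Z_def Zf_Cat)
    have tm: "ennreal (spmf (sample A R1 Ql (Er A R2 Qr)) (take i s)) *
          ennreal (spmf (sample A R2 (El_str A (take i s) Ql) Qr) (drop i s))
        = cnt R1 (take i s) * cnt R2 (drop i s) * ennreal (P / Z)" if i: "i \<in> {0..length s}" for i
    proof -
      define s1 where "s1 = take i s"
      define s2 where "s2 = drop i s"
      have s12: "s = s1 @ s2" by (simp add: s1_def s2_def)
      define Z2 where "Z2 = Zf A R2 (El_str A s1 Ql) Qr"
      have Z2eq: "Z2 = Ptilde A s1 Ql (Er A R2 Qr)" by (simp add: Z2_def Zf_El)
      have Z2nn: "0 \<le> Z2" unfolding Z2_def by (rule Zf_nonneg[OF c2 El_psd[OF Ql] Qr])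
      have Pe: "Ptilde A s2 (El_str A s1 Ql) Qr = P" by (simp add: P_def s12 Ptilde_append)
      have sp1: "ennreal (spmf (sample A R1 Ql (Er A R2 Qr)) s1) = cnt R1 s1 * ennreal (Z2 / Z)"
        using h1[of s1] Ql Qr2 Zp' Z1 Z2eq unfolding Mp_def by auto
      show ?thesis
      proof (cases "cnt R1 s1 = 0")
        case True then show ?thesis using sp1 by (simp add: s1_def s2_def)
      next
        case False
        have h2': "Mp A R2 s2" "Zp A R2 s2" using h2[OF i] False by (auto simp: s1_def s2_def)
        show ?thesis
        proof (cases "Z2 = 0")
          case True
          have "cnt R2 s2 * ennreal P = 0"
            using h2'(2) El_psd[OF Ql] Qr True Pe unfolding Zp_def Z2_def by auto
          then have "cnt R1 s1 * cnt R2 s2 * ennreal (P / Z) = 0"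
            using ennreal_div_split[OF P0 Zp'] by (auto simp: mult.assoc)
          then show ?thesis using sp1 True by (simp add: s1_def s2_def)
        next
          case False
          then have Z2p: "0 < Z2" using Z2nn by simp
          have "ennreal (spmf (sample A R2 (El_str A s1 Ql) Qr) s2) = cnt R2 s2 * ennreal (P / Z2)"
            using h2'(1) El_psd[OF Ql] Qr Z2p Pe unfolding Mp_def Z2_def by auto
          then have "ennreal (spmf (sample A R1 Ql (Er A R2 Qr)) s1) * ennreal (spmf (sample A R2 (El_str A s1 Ql) Qr) s2)
              = cnt R1 s1 * cnt R2 s2 * (ennreal (Z2 / Z) * ennreal (P / Z2))"
            using sp1 by (simp add: ac_simps)
          also have "\<dots> = cnt R1 s1 * cnt R2 s2 * ennreal (P / Z)"
            using ennreal_div_chain[OF P0 Z2p Zp'] by simp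
          finally show ?thesis by (simp add: s1_def s2_def)
        qed
      qed
    qed
    have "ennreal (spmf (sample A (Cat R1 R2) Ql Qr) s) = (\<Sum>i\<in>{0..length s}. cnt R1 (take i s) * cnt R2 (drop i s) * ennreal (P / Z))"
      unfolding spmf_cat by (rule sum.cong[OF refl tm])
    also have "\<dots> = cnt (Cat R1 R2) s * ennreal (P / Z)" by (simp add: sum_distrib_right)
    finally show "ennreal (spmf (sample A (Cat R1 R2) Ql Qr) s) = cnt (Cat R1 R2) s * ennreal (Ptilde A s Ql Qr / Zf A (Cat R1 R2) Ql Qr)"
      by (simp add: P_def Z_def)
  qed
next
  show "Zp A (Cat R1 R2) s"
    unfolding Zp_def
  proof (intro allI impI)
    fix Ql Qr :: "real^'n^'n"
    assume Ql: "psd Ql" and Qr: "psd Qr" and Z0: "Zf A (Cat R1 R2) Ql Qr = 0"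
    define P where "P = Ptilde A s Ql Qr"
    have Qr2: "psd (Er A R2 Qr)" by (rule Er_psd[OF c2 Qr])
    have Z1: "Zf A R1 Ql (Er A R2 Qr) = 0" using Z0 by (simp add: Zf_Cat)
    have tm: "cnt R1 (take i s) * cnt R2 (drop i s) * ennreal P = 0" if i: "i \<in> {0..length s}" for i
    proof -
      define s1 where "s1 = take i s"
      define s2 where "s2 = drop i s"
      have s12: "s = s1 @ s2" by (simp add: s1_def s2_def)
      define Z2 where "Z2 = Zf A R2 (El_str A s1 Ql) Qr"
      have Z2eq: "Z2 = Ptilde A s1 Ql (Er A R2 Qr)" by (simp add: Z2_def Zf_El)
      have Z2nn: "0 \<le> Z2" unfolding Z2_def by (rule Zf_nonneg[OF c2 El_psd[OF Ql] Qr])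
      have Pe: "Ptilde A s2 (El_str A s1 Ql) Qr = P" by (simp add: P_def s12 Ptilde_append)
      have a: "cnt R1 s1 * ennreal Z2 = 0"
        using h1[of s1] Ql Qr2 Z1 Z2eq unfolding Zp_def by auto
      show ?thesis
      proof (cases "cnt R1 s1 = 0")
        case True then show ?thesis by (simp add: s1_def)
      next
        case False
        then have "Z2 = 0" using a Z2nn by auto
        moreover have "Zp A R2 s2" using h2[OF i] False by (auto simp: s1_def s2_def)
        ultimately have "cnt R2 s2 * ennreal P = 0"
          using El_psd[OF Ql] Qr Pe unfolding Zp_def Z2_def by auto
        then show ?thesis by (simp add: s1_def s2_def mult.assoc)
      qed
    qed
    have "cnt (Cat R1 R2) s * ennreal P = (\<Sum>i\<in>{0..length s}. cnt R1 (take i s) * cnt R2 (drop i s) * ennreal P)"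
      by (simp add: sum_distrib_right)
    also have "\<dots> = 0" using tm by simp
    finally show "cnt (Cat R1 R2) s * ennreal (Ptilde A s Ql Qr) = 0" by (simp add: P_def)
  qed
qed



lemma sample_Chr: "sample A (Chr c) Ql Qr = return_spmf [c]"
  by (subst sample.simps) (simp only: regex.case)

lemma sample_Alt: "sample A (Alt R1 R2) Ql Qr = bind_spmf (spmf_of_pmf (bernoulli_pmf (Zf A R1 Ql Qr / Zf A (Alt R1 R2) Ql Qr)))
         (\<lambda>b. if b then sample A R1 Ql Qr else sample A R2 Ql Qr)"
  by (subst sample.simps) (simp only: regex.case)

lemma sample_Star: "sample A (Star S) Ql Qr = bind_spmf (spmf_of_pmf (bernoulli_pmf (trace (Ql ** Qr) / Zf A (Star S) Ql Qr)))
         (\<lambda>halt. if halt then return_spmf [] else sample A (Cat S (Star S)) Ql Qr)"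
  by (subst sample.simps) (simp only: regex.case)

lemma chr_main:
  fixes A :: "'c \<Rightarrow> real^'n^'n"
  shows "Mp A (Chr c) s \<and> Zp A (Chr c) s"
proof
  show "Mp A (Chr c) s"
    unfolding Mp_def
  proof (intro allI impI)
    fix Ql Qr :: "real^'n^'n"
    assume "psd Ql" "psd Qr" and Zpos: "Zf A (Chr c) Ql Qr > 0"
    show "ennreal (spmf (sample A (Chr c) Ql Qr) s) = cnt (Chr c) s * ennreal (Ptilde A s Ql Qr / Zf A (Chr c) Ql Qr)"
      using Zpos by (cases "s = [c]") (auto simp: sample_Chr Ptilde_single)
  qed
next
  show "Zp A (Chr c) s"
    unfolding Zp_def by (auto simp: Ptilde_single)
qed

lemma alt_main:
  fixes A :: "'c \<Rightarrow> real^'n^'n"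
  assumes c1: "Er_converges A R1" and c2: "Er_converges A R2"
    and h1: "Mp A R1 s" "Zp A R1 s" and h2: "Mp A R2 s" "Zp A R2 s"
  shows "Mp A (Alt R1 R2) s \<and> Zp A (Alt R1 R2) s"
proof
  show "Mp A (Alt R1 R2) s"
    unfolding Mp_def
  proof (intro allI impI)
    fix Ql Qr :: "real^'n^'n"
    assume Ql: "psd Ql" and Qr: "psd Qr" and Zpos: "Zf A (Alt R1 R2) Ql Qr > 0"
    define Z where "Z = Zf A (Alt R1 R2) Ql Qr"
    define Z1 where "Z1 = Zf A R1 Ql Qr"
    define Z2 where "Z2 = Zf A R2 Ql Qr"
    define P where "P = Ptilde A s Ql Qr"
    have P0: "0 \<le> P" unfolding P_def by (rule Ptilde_nonneg[OF Ql Qr])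
    have Zp': "0 < Z" using Zpos Z_def by simp
    have ZZ: "Z = Z1 + Z2" by (simp add: Z_def Z1_def Z2_def Zf_Alt)
    have Z1n: "0 \<le> Z1" unfolding Z1_def by (rule Zf_nonneg[OF c1 Ql Qr])
    have Z2n: "0 \<le> Z2" unfolding Z2_def by (rule Zf_nonneg[OF c2 Ql Qr])
    have p01: "0 \<le> Z1 / Z" "Z1 / Z \<le> 1" using Zp' ZZ Z1n Z2n by auto
    have onem: "1 - Z1 / Z = Z2 / Z" using Zp' ZZ by (simp add: field_simps)
    have sp: "ennreal (spmf (sample A (Alt R1 R2) Ql Qr) s)
        = ennreal (spmf (sample A R1 Ql Qr) s) * ennreal (Z1 / Z) + ennreal (spmf (sample A R2 Ql Qr) s) * ennreal (Z2 / Z)"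
    proof -
      have eqA: "sample A (Alt R1 R2) Ql Qr = bind_spmf (spmf_of_pmf (bernoulli_pmf (Z1/Z))) (\<lambda>b. if b then sample A R1 Ql Qr else sample A R2 Ql Qr)"
        by (simp only: sample_Alt Z1_def Z_def)
      show ?thesis unfolding eqA spmf_bernoulli_bind[OF p01] by (simp only: onem if_True if_False)
    qed
    have t1: "ennreal (spmf (sample A R1 Ql Qr) s) * ennreal (Z1 / Z) = cnt R1 s * ennreal (P / Z)"
    proof (cases "Z1 = 0")
      case True
      then have "cnt R1 s * ennreal P = 0" using h1(2) Ql Qr unfolding Zp_def Z1_def P_def by auto
      then have "cnt R1 s * ennreal (P / Z) = 0" using ennreal_div_split[OF P0 Zp'] by (auto simp: mult.assoc)
      then show ?thesis using True by simp
    next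
      case False
      then have "0 < Z1" using Z1n by simp
      moreover have "ennreal (spmf (sample A R1 Ql Qr) s) = cnt R1 s * ennreal (P / Z1)"
        using h1(1) Ql Qr \<open>0 < Z1\<close> unfolding Mp_def Z1_def P_def by auto
      ultimately show ?thesis using ennreal_div_chain[OF P0 _ Zp', of Z1] by (simp add: ac_simps)
    qed
    have t2: "ennreal (spmf (sample A R2 Ql Qr) s) * ennreal (Z2 / Z) = cnt R2 s * ennreal (P / Z)"
    proof (cases "Z2 = 0")
      case True
      then have "cnt R2 s * ennreal P = 0" using h2(2) Ql Qr unfolding Zp_def Z2_def P_def by auto
      then have "cnt R2 s * ennreal (P / Z) = 0" using ennreal_div_split[OF P0 Zp'] by (auto simp: mult.assoc)
      then show ?thesis using True by simp
    next
      case False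
      then have "0 < Z2" using Z2n by simp
      moreover have "ennreal (spmf (sample A R2 Ql Qr) s) = cnt R2 s * ennreal (P / Z2)"
        using h2(1) Ql Qr \<open>0 < Z2\<close> unfolding Mp_def Z2_def P_def by auto
      ultimately show ?thesis using ennreal_div_chain[OF P0 _ Zp', of Z2] by (simp add: ac_simps)
    qed
    show "ennreal (spmf (sample A (Alt R1 R2) Ql Qr) s) = cnt (Alt R1 R2) s * ennreal (Ptilde A s Ql Qr / Zf A (Alt R1 R2) Ql Qr)"
      using sp t1 t2 by (simp add: P_def Z_def distrib_right)
  qed
next
  show "Zp A (Alt R1 R2) s"
    unfolding Zp_def
  proof (intro allI impI)
    fix Ql Qr :: "real^'n^'n"
    assume Ql: "psd Ql" and Qr: "psd Qr" and Z0: "Zf A (Alt R1 R2) Ql Qr = 0"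
    have "Zf A R1 Ql Qr = 0" "Zf A R2 Ql Qr = 0"
      using Z0 Zf_nonneg[OF c1 Ql Qr] Zf_nonneg[OF c2 Ql Qr] by (auto simp: Zf_Alt)
    then show "cnt (Alt R1 R2) s * ennreal (Ptilde A s Ql Qr) = 0"
      using h1(2) h2(2) Ql Qr unfolding Zp_def by (simp add: distrib_right)
  qed
qed



lemma star_main:
  fixes A :: "'c \<Rightarrow> real^'n^'n"
  assumes conv: "Er_converges A (Star S)" and hS: "\<And>t. Mp A S t \<and> Zp A S t"
  shows "Mp A (Star S) s \<and> Zp A (Star S) s"
proof (induction s rule: length_induct)
  case (1 s)
  have cS: "Er_converges A S" using conv by simp
  have cC: "Er_converges A (Cat S (Star S))" using conv by simp
  have cnil: "cnt S [] = 0" by (rule cnt_nil_zero[OF conv])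
  have cat: "Mp A (Cat S (Star S)) s \<and> Zp A (Cat S (Star S)) s"
  proof (rule cat_main[OF cS conv hS])
    fix i assume i: "i \<in> {0..length s}" and ne: "cnt S (take i s) \<noteq> 0"
    have "i \<noteq> 0"
    proof
      assume "i = 0" then show False using ne cnil by simp
    qed
    then have "length (drop i s) < length s" using i by auto
    then show "Mp A (Star S) (drop i s) \<and> Zp A (Star S) (drop i s)" using "1" by blast
  qed
  have cntU: "cnt (Star S) s = (if s = [] then 1 else 0) + cnt (Cat S (Star S)) s"
    by (subst cnt_Star_unfold) (simp only: cnt.simps(2))
  show ?case
  proof
    show "Mp A (Star S) s"
      unfolding Mp_def
    proof (intro allI impI)
      fix Ql Qr :: "real^'n^'n"
      assume Ql: "psd Ql" and Qr: "psd Qr" and Zpos: "Zf A (Star S) Ql Qr > 0"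
      define Z where "Z = Zf A (Star S) Ql Qr"
      define Z' where "Z' = Zf A (Cat S (Star S)) Ql Qr"
      define T where "T = trace (Ql ** Qr)"
      define P where "P = Ptilde A s Ql Qr"
      have P0: "0 \<le> P" unfolding P_def by (rule Ptilde_nonneg[OF Ql Qr])
      have Zp': "0 < Z" using Zpos Z_def by simp
      have ZZ: "Z = T + Z'" by (simp add: Z_def Z'_def T_def Zf_Star[OF conv])
      have Tn: "0 \<le> T" unfolding T_def by (rule trace_psd_nonneg[OF Ql Qr])
      have Z'n: "0 \<le> Z'" unfolding Z'_def by (rule Zf_nonneg[OF cC Ql Qr])
      have p01: "0 \<le> T / Z" "T / Z \<le> 1" using Zp' ZZ Tn Z'n by auto
      have onem: "1 - T / Z = Z' / Z" using Zp' ZZ by (simp add: field_simps)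
      have PT: "s = [] \<Longrightarrow> P = T" by (simp add: P_def T_def Ptilde_Nil)
      have sp: "ennreal (spmf (sample A (Star S) Ql Qr) s)
          = ennreal (spmf (return_spmf []) s) * ennreal (T / Z) + ennreal (spmf (sample A (Cat S (Star S)) Ql Qr) s) * ennreal (Z' / Z)"
      proof -
        have eqA: "sample A (Star S) Ql Qr = bind_spmf (spmf_of_pmf (bernoulli_pmf (T/Z))) (\<lambda>halt. if halt then return_spmf [] else sample A (Cat S (Star S)) Ql Qr)"
          by (simp only: sample_Star T_def Z_def)
        show ?thesis unfolding eqA spmf_bernoulli_bind[OF p01] by (simp only: onem if_True if_False)
      qed
      have t1: "ennreal (spmf (return_spmf []) s) * ennreal (T / Z) = (if s = [] then 1 else 0) * ennreal (P / Z)"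
        using PT by auto
      have t2: "ennreal (spmf (sample A (Cat S (Star S)) Ql Qr) s) * ennreal (Z' / Z) = cnt (Cat S (Star S)) s * ennreal (P / Z)"
      proof (cases "Z' = 0")
        case True
        then have "cnt (Cat S (Star S)) s * ennreal P = 0" using cat Ql Qr unfolding Zp_def Z'_def P_def by auto
        then have "cnt (Cat S (Star S)) s * ennreal (P / Z) = 0" using ennreal_div_split[OF P0 Zp'] by (auto simp: mult.assoc)
        then show ?thesis using True by simp
      next
        case False
        then have "0 < Z'" using Z'n by simp
        moreover have "ennreal (spmf (sample A (Cat S (Star S)) Ql Qr) s) = cnt (Cat S (Star S)) s * ennreal (P / Z')"
          using cat Ql Qr \<open>0 < Z'\<close> unfolding Mp_def Z'_def P_def by auto
        ultimately show ?thesis using ennreal_div_chain[OF P0 _ Zp', of Z'] by (metis mult.assoc mult.commute)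
      qed
      show "ennreal (spmf (sample A (Star S) Ql Qr) s) = cnt (Star S) s * ennreal (Ptilde A s Ql Qr / Zf A (Star S) Ql Qr)"
        unfolding cntU using sp t1 t2 by (simp add: P_def Z_def distrib_right)
    qed
  next
    show "Zp A (Star S) s"
      unfolding Zp_def
    proof (intro allI impI)
      fix Ql Qr :: "real^'n^'n"
      assume Ql: "psd Ql" and Qr: "psd Qr" and Z0: "Zf A (Star S) Ql Qr = 0"
      have Tn: "0 \<le> trace (Ql ** Qr)" by (rule trace_psd_nonneg[OF Ql Qr])
      have Z'n: "0 \<le> Zf A (Cat S (Star S)) Ql Qr" by (rule Zf_nonneg[OF cC Ql Qr])
      have T0: "trace (Ql ** Qr) = 0" and Z'0: "Zf A (Cat S (Star S)) Ql Qr = 0"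
        using Z0 Tn Z'n Zf_Star[OF conv, of Ql Qr] by auto
      have a: "cnt (Cat S (Star S)) s * ennreal (Ptilde A s Ql Qr) = 0"
        using cat Ql Qr Z'0 unfolding Zp_def by auto
      have b: "(if s = [] then 1 else 0) * ennreal (Ptilde A s Ql Qr) = 0"
        using T0 by (auto simp: Ptilde_Nil)
      show "cnt (Star S) s * ennreal (Ptilde A s Ql Qr) = 0"
        unfolding cntU using a b by (simp only: distrib_right add_0)
    qed
  qed
qed

lemma all_main:
  fixes A :: "'c \<Rightarrow> real^'n^'n"
  shows "Er_converges A R \<Longrightarrow> Mp A R s \<and> Zp A R s"
proof (induction R arbitrary: s)
  case (Chr c) show ?case by (rule chr_main)
next
  case (Cat R1 R2) then show ?case by (intro cat_main) auto
next
  case (Alt R1 R2) then show ?case by (intro alt_main) auto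
next
  case (Star S) then show ?case by (intro star_main) auto
qed

theorem lemma1:
  fixes A :: "'c::finite \<Rightarrow> real^'n^'n"
    and R :: "'c regex"
    and Ql Qr :: "real^'n^'n"
    and s :: "'c list"
  assumes "Er_converges A R"
    and "psd Ql" and "psd Qr"
    and "Zf A R Ql Qr > 0"
  shows "ennreal (spmf (sample A R Ql Qr) s) = cnt R s * ennreal (Ptilde A s Ql Qr / Zf A R Ql Qr)"
  using all_main[OF assms(1), of s] assms(2-4) unfolding Mp_def by blast


end
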